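(* For every positive integer $n$, the number $b_n$ of inequivalent binary rooted trees with $n$ leaves equals $$b_n = \sum_\lambda \frac{\prod_{i=2}^{\ell(\lambda)} \left(2(\lambda_i+\cdots+\lambda_{\ell(\lambda)})-1\right)}{z_\lambda},$$ where the sum is over all binary partitions $\lambda=(\lambda_1\ge\cdots\ge\lambda_{\ell(\lambda)})$ of $n$.
   Context: A binary rooted tree is a rooted tree in which every vertex has either $0$ or $2$ children (leaves have none). Two such trees are equivalent if there is a graph isomorphism between them mapping root to root; $b_n$ is the number of equivalence classes of binary rooted trees with $n$ leaves. A partition is binary if all its parts are powers of $2$ (with $1=2^0$ allowed); $\ell(\lambda)$ is the number of parts. For a binary partition $\lambda$ with $m_i$ parts equal to $2^i$ ($i=0,\dots,j$), $z_\lambda=\prod_{i=0}^{j}(2^i)^{m_i}\,m_i!$. *)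

theory Defs
  imports Complex_Main
begin

text \<open>Binary rooted trees: every vertex has 0 or 2 children.  Represented as
  plane trees; rooted isomorphism = equivalence up to swapping children at
  any vertex.\<close>

datatype btree = Leaf | Node btree btree

fun leaves :: "btree \<Rightarrow> nat" where
  "leaves Leaf = 1"
| "leaves (Node l r) = leaves l + leaves r"

inductive tree_iso :: "btree \<Rightarrow> btree \<Rightarrow> bool" where
  iso_leaf: "tree_iso Leaf Leaf"
| iso_straight: "tree_iso l l' \<Longrightarrow> tree_iso r r' \<Longrightarrow> tree_iso (Node l r) (Node l' r')"
| iso_swap: "tree_iso l r' \<Longrightarrow> tree_iso r l' \<Longrightarrow> tree_iso (Node l r) (Node l' r')"

definition b :: "nat \<Rightarrow> nat" where
  "b n = card ({t. leaves t = n} // {(s, t). tree_iso s t})"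

definition binary_partitions :: "nat \<Rightarrow> nat list set" where
  "binary_partitions n = {lam. sorted_wrt (\<ge>) lam \<and> (\<forall>p\<in>set lam. \<exists>k. p = 2 ^ k)
                               \<and> sum_list lam = n}"

definition mult :: "nat list \<Rightarrow> nat \<Rightarrow> nat" where
  "mult lam i = count_list lam (2 ^ i)"

text \<open>z_lambda = prod_i (2^i)^{m_i} m_i!; indices i with 2^i > |lambda| have m_i = 0.\<close>
definition z :: "nat list \<Rightarrow> nat" where
  "z lam = (\<Prod>i\<in>{0..sum_list lam}. (2 ^ i) ^ mult lam i * fact (mult lam i))"

end

theory Submission
  imports Defs "HOL-Computational_Algebra.Formal_Power_Series" "HOL-Library.Nat_Bijection"
begin

fun code :: "btree \<Rightarrow> nat" where
  "code Leaf = 0"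
| "code (Node l r) = Suc (prod_encode (code l, code r))"

lemma code_inj: "code s = code t \<Longrightarrow> s = t"
proof (induction s arbitrary: t)
  case Leaf thus ?case by (cases t) auto
next
  case (Node l r)
  thus ?case by (cases t) (auto simp: prod_encode_eq)
qed

fun canon :: "btree \<Rightarrow> btree" where
  "canon Leaf = Leaf"
| "canon (Node l r) = (if code (canon l) \<le> code (canon r) then Node (canon l) (canon r) else Node (canon r) (canon l))"

lemma leaves_pos: "leaves t \<ge> 1"
  by (induction t) auto

lemma leaves_canon: "leaves (canon t) = leaves t"
  by (induction t) auto

lemma iso_canon: "tree_iso t (canon t)"
  by (induction t) (auto intro: tree_iso.intros)

lemma iso_leaves: "tree_iso s t \<Longrightarrow> leaves s = leaves t"
  by (induction rule: tree_iso.induct) auto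

lemma iso_canon_eq: "tree_iso s t \<Longrightarrow> canon s = canon t"
proof (induction rule: tree_iso.induct)
  case iso_leaf thus ?case by simp
next
  case (iso_straight l l' r r') thus ?case by simp
next
  case (iso_swap l r' r l')
  show ?case
  proof (cases "code (canon l) = code (canon r)")
    case True
    hence "canon l = canon r" by (rule code_inj)
    thus ?thesis using iso_swap.IH by simp
  next
    case False
    thus ?thesis using iso_swap.IH by auto
  qed
qed

lemma iso_sym: "tree_iso s t \<Longrightarrow> tree_iso t s"
  by (induction rule: tree_iso.induct) (auto intro: tree_iso.intros)

lemma iso_trans: "tree_iso s t \<Longrightarrow> tree_iso t u \<Longrightarrow> tree_iso s u"
proof (induction arbitrary: u rule: tree_iso.induct)
  case iso_leaf thus ?case by simp
next
  case (iso_straight l l' r r')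
  from iso_straight.prems show ?case
    by (cases rule: tree_iso.cases) (auto intro: tree_iso.intros iso_straight.IH)
next
  case (iso_swap l r' r l')
  from iso_swap.prems show ?case
    by (cases rule: tree_iso.cases) (auto intro: tree_iso.intros iso_swap.IH)
qed

lemma canon_idem: "canon (canon t) = canon t"
  using iso_canon_eq[OF iso_canon[of t]] by simp

lemma iso_iff: "tree_iso s t \<longleftrightarrow> canon s = canon t"
proof
  assume "canon s = canon t"
  hence "tree_iso (canon s) t" using iso_sym[OF iso_canon[of t]] by simp
  thus "tree_iso s t" using iso_trans[OF iso_canon[of s]] by blast
qed (rule iso_canon_eq)

lemma finite_leaves: "finite {t. leaves t = n}"
proof (induction n rule: less_induct)
  case (less n)
  have fin: "finite {t. leaves t < n}"
  proof -
    have "{t. leaves t < n} = (\<Union>k<n. {t. leaves t = k})" by auto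
    thus ?thesis using less by simp
  qed
  have "{t. leaves t = n} \<subseteq> {Leaf} \<union> (\<lambda>(l, r). Node l r) ` ({t. leaves t < n} \<times> {t. leaves t < n})"
  proof
    fix t assume "t \<in> {t. leaves t = n}"
    thus "t \<in> {Leaf} \<union> (\<lambda>(l, r). Node l r) ` ({t. leaves t < n} \<times> {t. leaves t < n})"
    proof (cases t)
      case (Node l r)
      moreover have "leaves l \<ge> 1" "leaves r \<ge> 1" by (rule leaves_pos)+
      ultimately show ?thesis using \<open>t \<in> {t. leaves t = n}\<close> by force
    qed simp
  qed
  moreover have "finite ({Leaf} \<union> (\<lambda>(l, r). Node l r) ` ({t. leaves t < n} \<times> {t. leaves t < n}))"
    using fin by simp
  ultimately show ?case by (rule finite_subset)
qed

definition CT :: "nat \<Rightarrow> btree set" where "CT n = {t. canon t = t \<and> leaves t = n}"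

lemma finite_CT: "finite (CT n)"
  by (rule finite_subset[OF _ finite_leaves[of n]]) (auto simp: CT_def)

lemma b_CT: "b n = card (CT n)"
proof -
  let ?A = "{t. leaves t = n}" and ?R = "{(s, t). tree_iso s t}"
  let ?phi = "\<lambda>c. {t. canon t = c}"
  have img: "canon ` ?A = CT n"
  proof
    show "canon ` ?A \<subseteq> CT n" by (auto simp: CT_def canon_idem leaves_canon)
    show "CT n \<subseteq> canon ` ?A"
    proof
      fix t assume "t \<in> CT n"
      hence "t = canon t" "t \<in> ?A" by (auto simp: CT_def)
      thus "t \<in> canon ` ?A" by (rule image_eqI)
    qed
  qed
  have cls: "?R `` {x} = ?phi (canon x)" for x by (auto simp: iso_iff)
  have "?A // ?R = (\<lambda>x. ?phi (canon x)) ` ?A"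
    unfolding quotient_def cls by blast
  hence "?A // ?R = ?phi ` (canon ` ?A)" by (simp add: image_image)
  moreover have "inj_on ?phi (canon ` ?A)"
  proof (rule inj_onI)
    fix c c' assume "c \<in> canon ` ?A" "c' \<in> canon ` ?A" "?phi c = ?phi c'"
    moreover have "canon c = c" using \<open>c \<in> canon ` ?A\<close> canon_idem by auto
    ultimately show "c = c'" by blast
  qed
  ultimately have "card (?A // ?R) = card (canon ` ?A)" by (simp add: card_image)
  thus ?thesis unfolding b_def img .
qed

lemma canon_Node_iff: "canon (Node a c) = Node a c \<longleftrightarrow> canon a = a \<and> canon c = c \<and> code a \<le> code c"
proof
  assume h: "canon (Node a c) = Node a c"
  show "canon a = a \<and> canon c = c \<and> code a \<le> code c"
  proof (cases "code (canon a) \<le> code (canon c)")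
    case True thus ?thesis using h by simp
  next
    case False
    hence e: "canon c = a" "canon a = c" using h by auto
    hence "canon a = a" using canon_idem[of c] by simp
    hence "a = c" using e by simp
    thus ?thesis using False e by simp
  qed
qed simp

definition Pairs :: "nat \<Rightarrow> (btree \<times> btree) set" where
  "Pairs n = {(a, c). canon a = a \<and> canon c = c \<and> leaves a + leaves c = n}"

lemma Pairs_UN: "Pairs n = (\<Union>k\<in>{0..n}. CT k \<times> CT (n - k))"
  by (auto simp: Pairs_def CT_def)

lemma finite_Pairs: "finite (Pairs n)"
  unfolding Pairs_UN by (simp add: finite_CT)

lemma card_Pairs: "card (Pairs n) = (\<Sum>k=0..n. card (CT k) * card (CT (n - k)))"
proof -
  have "card (Pairs n) = (\<Sum>k\<in>{0..n}. card (CT k \<times> CT (n - k)))"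
    unfolding Pairs_UN
    apply (rule card_UN_disjoint)
      apply simp
     apply (simp add: finite_CT)
    apply (auto simp: CT_def)
    done
  thus ?thesis by (simp add: card_cartesian_product)
qed

lemma b_rec_nat: assumes "n \<ge> 2"
  shows "2 * b n = (\<Sum>k=0..n. b k * b (n - k)) + (if even n then b (n div 2) else 0)"
proof -
  define Le where "Le = {p \<in> Pairs n. code (fst p) \<le> code (snd p)}"
  define Lt where "Lt = {p \<in> Pairs n. code (fst p) < code (snd p)}"
  define Gt where "Gt = {p \<in> Pairs n. code (fst p) > code (snd p)}"
  define Eq where "Eq = {p \<in> Pairs n. fst p = snd p}"
  have fP: "finite (Pairs n)" by (rule finite_Pairs)
  have fLe: "finite Le" "finite Lt" "finite Gt" "finite Eq"
    unfolding Le_def Lt_def Gt_def Eq_def using fP by auto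
  have "Pairs n = Le \<union> Gt" "Le \<inter> Gt = {}" unfolding Le_def Gt_def by auto
  hence c1: "card (Pairs n) = card Le + card Gt" using fLe by (simp add: card_Un_disjoint)
  have "Le = Lt \<union> Eq" "Lt \<inter> Eq = {}"
    unfolding Le_def Lt_def Eq_def using code_inj by (auto simp: le_less)
  hence c2: "card Le = card Lt + card Eq" using fLe by (simp add: card_Un_disjoint)
  have "bij_betw (\<lambda>(a, c). (c, a)) Gt Lt"
    by (rule bij_betw_byWitness[where f'="\<lambda>(a, c). (c, a)"]) (auto simp: Gt_def Lt_def Pairs_def)
  hence c3: "card Gt = card Lt" by (simp add: bij_betw_same_card)
  have c4: "card Eq = (if even n then b (n div 2) else 0)"
  proof -
    have "Eq = (\<lambda>a. (a, a)) ` {a. canon a = a \<and> 2 * leaves a = n}"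
      by (auto simp: Eq_def Pairs_def)
    hence "card Eq = card {a. canon a = a \<and> 2 * leaves a = n}"
      by (simp add: card_image inj_on_def)
    moreover have "{a. canon a = a \<and> 2 * leaves a = n} = (if even n then CT (n div 2) else {})"
      by (auto simp: CT_def)
    ultimately show ?thesis by (simp add: b_CT)
  qed
  have c5: "card (CT n) = card Le"
  proof -
    have "CT n = (\<lambda>(a, c). Node a c) ` Le"
    proof
      show "(\<lambda>(a, c). Node a c) ` Le \<subseteq> CT n"
        by (auto simp: Le_def Pairs_def CT_def canon_Node_iff)
      show "CT n \<subseteq> (\<lambda>(a, c). Node a c) ` Le"
      proof
        fix t assume t: "t \<in> CT n"
        show "t \<in> (\<lambda>(a, c). Node a c) ` Le"
        proof (cases t)
          case Leaf thus ?thesis using t assms by (simp add: CT_def)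
        next
          case (Node a c)
          have "canon (Node a c) = Node a c" "leaves (Node a c) = n" using t Node by (auto simp: CT_def)
          hence "(a, c) \<in> Le" unfolding canon_Node_iff by (simp add: Le_def Pairs_def)
          thus ?thesis using Node by force
        qed
      qed
    qed
    moreover have "inj_on (\<lambda>(a, c). Node a c) Le" by (auto simp: inj_on_def)
    ultimately show ?thesis by (simp add: card_image)
  qed
  have "2 * b n = card (Pairs n) + card Eq" using c1 c2 c3 c5 b_CT[of n] by simp
  thus ?thesis using c4 card_Pairs by (simp add: b_CT)
qed

lemma b0: "b 0 = 0"
proof -
  have "leaves t \<noteq> 0" for t using leaves_pos[of t] by simp
  hence "CT 0 = {}" by (auto simp: CT_def)
  thus ?thesis by (simp add: b_CT)
qed

lemma b1: "b 1 = 1"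
proof -
  have "CT 1 = {Leaf}"
  proof
    show "CT 1 \<subseteq> {Leaf}"
    proof
      fix t assume t: "t \<in> CT 1"
      show "t \<in> {Leaf}"
      proof (cases t)
        case (Node l r)
        have "leaves l \<ge> 1" "leaves r \<ge> 1" by (rule leaves_pos)+
        thus ?thesis using t Node by (simp add: CT_def)
      qed simp
    qed
  qed (simp add: CT_def)
  thus ?thesis by (simp add: b_CT)
qed


definition pw :: "real \<Rightarrow> real fps \<Rightarrow> real fps" where
  "pw a f = fps_binomial a oo (f - 1)"

lemma pw_nth0[simp]: "fps_nth (pw a f) 0 = 1"
  by (simp add: pw_def)

lemma pw_add: assumes "fps_nth f 0 = 1" shows "pw (a + c) f = pw a f * pw c f"
  unfolding pw_def fps_binomial_add_mult
  by (rule fps_compose_mult_distrib) (simp add: assms)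

lemma pw_0[simp]: "pw 0 f = 1"
  by (simp add: pw_def)

lemma pw_nat: assumes "fps_nth f 0 = 1" shows "pw (of_nat k) f = f ^ k"
proof -
  have h0: "fps_nth (f - 1) 0 = 0" using assms by simp
  have "pw (of_nat k) f = ((1 + fps_X) oo (f - 1)) ^ k"
    unfolding pw_def fps_binomial_of_nat fps_compose_power[OF h0] ..
  also have "(1 + fps_X) oo (f - 1) = f"
    by (simp add: fps_compose_add_distrib h0 assms)
  finally show ?thesis .
qed

lemma binom_ode: "(1 + fps_X) * fps_deriv (fps_binomial a) = fps_const (a::real) * fps_binomial a"
proof -
  have u: "is_unit (1 + fps_X :: real fps)" by (simp add: fps_is_unit_iff)
  show ?thesis unfolding fps_binomial_deriv
    using u by (simp add: dvd_mult_div_cancel unit_imp_dvd)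
qed

lemma pw_deriv: assumes "fps_nth f 0 = 1"
  shows "f * fps_deriv (pw a f) = fps_const a * fps_deriv f * pw a f"
proof -
  have h0: "fps_nth (f - 1) 0 = 0" using assms by simp
  have "((1 + fps_X) * fps_deriv (fps_binomial a)) oo (f - 1) = (fps_const a * fps_binomial a) oo (f - 1)"
    by (simp add: binom_ode)
  hence "f * (fps_deriv (fps_binomial a) oo (f - 1)) = fps_const a * pw a f"
    by (simp add: fps_compose_mult_distrib[OF h0] fps_compose_add_distrib h0 pw_def assms)
  moreover have "fps_deriv (pw a f) = (fps_deriv (fps_binomial a) oo (f - 1)) * fps_deriv f"
    unfolding pw_def by (simp add: fps_compose_deriv[OF h0])
  ultimately show ?thesis by (metis mult.assoc mult.commute)
qed

lemma pw_unique: assumes f0: "fps_nth f 0 = 1" and g0: "fps_nth g 0 = 1"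
  and ode: "f * fps_deriv g = fps_const a * fps_deriv f * g"
  shows "g = pw a f"
proof -
  let ?p = "pw (-a) f"
  have d: "f * fps_deriv ?p = fps_const (-a) * fps_deriv f * ?p" by (rule pw_deriv[OF f0])
  have "f * fps_deriv (g * ?p) = (f * fps_deriv g) * ?p + g * (f * fps_deriv ?p)"
    by (simp add: algebra_simps)
  also have "\<dots> = 0" unfolding ode d by (simp add: algebra_simps fps_const_neg[symmetric] del: fps_const_neg)
  finally have "f * fps_deriv (g * ?p) = 0" .
  moreover have "f \<noteq> 0" using f0 by auto
  ultimately have "fps_deriv (g * ?p) = 0" by simp
  hence "g * ?p = fps_const (fps_nth (g * ?p) 0)" using fps_deriv_eq_0_iff by blast
  hence gp: "g * ?p = 1" using g0 by simp
  have "g = g * (?p * pw a f)" using pw_add[OF f0, of "-a" a, symmetric] by simp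
  also have "\<dots> = pw a f" using gp by (simp add: mult.assoc[symmetric])
  finally show ?thesis .
qed

lemma pw_mult: assumes f0: "fps_nth f 0 = 1" and g0: "fps_nth g 0 = 1"
  shows "pw a (f * g) = pw a f * pw a g"
proof -
  have fg0: "fps_nth (f * g) 0 = 1" using f0 g0 by simp
  have d1: "f * fps_deriv (pw a f) = fps_const a * fps_deriv f * pw a f" by (rule pw_deriv[OF f0])
  have d2: "g * fps_deriv (pw a g) = fps_const a * fps_deriv g * pw a g" by (rule pw_deriv[OF g0])
  have "f * g * fps_deriv (pw a f * pw a g)
      = g * pw a g * (f * fps_deriv (pw a f)) + f * pw a f * (g * fps_deriv (pw a g))"
    by (simp add: algebra_simps)
  also have "\<dots> = fps_const a * fps_deriv (f * g) * (pw a f * pw a g)"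
    unfolding d1 d2 by (simp add: algebra_simps)
  finally show ?thesis
    by (intro pw_unique[symmetric] fg0) (simp_all add: f0 g0)
qed

lemma pw_compose: assumes h0: "fps_nth h 0 = 0" and f0: "fps_nth f 0 = 1"
  shows "pw a f oo h = pw a (f oo h)"
proof -
  have c: "fps_nth (f - 1) 0 = 0" using f0 by simp
  have "pw a f oo h = fps_binomial a oo ((f - 1) oo h)"
    unfolding pw_def by (rule fps_compose_assoc[OF h0 c, symmetric])
  also have "(f - 1) oo h = (f oo h) - 1" by (simp add: fps_compose_sub_distrib)
  finally show ?thesis by (simp add: pw_def)
qed

lemma pw_minus_nat: assumes f0: "fps_nth f 0 = 1"
  shows "pw a f = pw (a - of_nat k) f * f ^ k"
  using pw_add[OF f0, of "a - of_nat k" "of_nat k"] pw_nat[OF f0, of k] by simp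

lemma compose_X2_nth:
  "fps_nth (f oo fps_X ^ 2) n = (if even n then fps_nth f (n div 2) else (0::real))"
proof -
  have "fps_nth (f oo fps_X ^ 2) n = (\<Sum>i = 0..n. fps_nth f i * (if n = 2 * i then 1 else 0))"
    by (simp add: fps_compose_nth power_mult[symmetric] mult.commute)
  also have "\<dots> = (\<Sum>i \<in> {0..n}. if i = n div 2 \<and> even n then fps_nth f i else 0)"
    by (intro sum.cong refl) auto
  also have "\<dots> = (if even n then fps_nth f (n div 2) else 0)"
    by (cases "even n") (simp_all add: sum.delta)
  finally show ?thesis .
qed

lemma compose_coeff_sum:
  assumes d0: "fps_nth d 0 = (0::real)"
  shows "fps_nth (g * (bb oo d)) n = (\<Sum>i = 0..n. fps_nth bb i * fps_nth (g * d ^ i) n)"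
proof -
  have z: "fps_nth (d ^ i) j = 0" if "j < i" for i j
    using startsby_zero_power_prefix[OF d0] that by blast
  have "fps_nth (g * (bb oo d)) n = (\<Sum>k = 0..n. fps_nth g k * (\<Sum>i = 0..n - k. fps_nth bb i * fps_nth (d ^ i) (n - k)))"
    by (simp add: fps_mult_nth fps_compose_nth)
  also have "\<dots> = (\<Sum>k = 0..n. fps_nth g k * (\<Sum>i = 0..n. fps_nth bb i * fps_nth (d ^ i) (n - k)))"
  proof (rule sum.cong[OF refl])
    fix k assume k: "k \<in> {0..n}"
    have "(\<Sum>i = 0..n - k. fps_nth bb i * fps_nth (d ^ i) (n - k)) = (\<Sum>i = 0..n. fps_nth bb i * fps_nth (d ^ i) (n - k))"
      by (rule sum.mono_neutral_left) (auto simp: z)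
    thus "fps_nth g k * (\<Sum>i = 0..n - k. fps_nth bb i * fps_nth (d ^ i) (n - k)) = fps_nth g k * (\<Sum>i = 0..n. fps_nth bb i * fps_nth (d ^ i) (n - k))"
      by simp
  qed
  also have "\<dots> = (\<Sum>k = 0..n. \<Sum>i = 0..n. fps_nth bb i * (fps_nth g k * fps_nth (d ^ i) (n - k)))"
    by (simp add: sum_distrib_left mult.left_commute)
  also have "\<dots> = (\<Sum>i = 0..n. \<Sum>k = 0..n. fps_nth bb i * (fps_nth g k * fps_nth (d ^ i) (n - k)))"
    by (rule sum.swap)
  also have "\<dots> = (\<Sum>i = 0..n. fps_nth bb i * fps_nth (g * d ^ i) n)"
    by (simp add: fps_mult_nth sum_distrib_left)
  finally show ?thesis .
qed
lemma gchoose_cf: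
  "((-(t/2+1)) gchoose i) * (-2) ^ i = (\<Prod>j\<in>{1..i}. 2 * real j + t) / fact i"
proof -
  have "fact i * ((-(t/2+1)) gchoose i) * (-2) ^ i = (-2) ^ i * (\<Prod>j = 0..<i. -(t/2+1) - of_nat j)"
    by (simp add: gbinomial_mult_fact)
  also have "\<dots> = (\<Prod>j\<in>{1..i}. 2 * real j + t)"
  proof (induction i)
    case 0 show ?case by simp
  next
    case (Suc i)
    have "(-2::real) ^ Suc i * (\<Prod>j = 0..<Suc i. -(t/2+1) - of_nat j)
        = ((-2) ^ i * (\<Prod>j = 0..<i. -(t/2+1) - of_nat j)) * ((-2) * (-(t/2+1) - of_nat i))"
      by (simp add: algebra_simps)
    also have "\<dots> = (\<Prod>j\<in>{1..i}. 2 * real j + t) * (2 * real (Suc i) + t)"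
      unfolding Suc by (simp add: algebra_simps)
    also have "\<dots> = (\<Prod>j\<in>{1..Suc i}. 2 * real j + t)"
      by (simp add: prod.cl_ivl_Suc)
    finally show ?case .
  qed
  finally show ?thesis by (simp add: field_simps)
qed

definition Sf :: "(nat \<Rightarrow> real) \<Rightarrow> real fps" where "Sf bb = 1 - Abs_fps bb"
definition Wf :: "(nat \<Rightarrow> real) \<Rightarrow> real fps" where "Wf bb = Sf bb - 2 * fps_X * fps_deriv (Sf bb)"
definition Wt :: "(nat \<Rightarrow> real) \<Rightarrow> real \<Rightarrow> real fps" where "Wt bb t = Wf bb * pw (-(t+1)) (Sf bb)"

definition cf :: "real \<Rightarrow> nat \<Rightarrow> real" where
  "cf t m = (\<Prod>j\<in>{1..m}. 2 * real j + t) / fact m"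

context
  fixes bb :: "nat \<Rightarrow> real"
  assumes bb0: "bb 0 = 0" and bb1: "bb 1 = 1"
    and brec: "\<And>n. n \<ge> 2 \<Longrightarrow> 2 * bb n = (\<Sum>k=0..n. bb k * bb (n-k)) + (if even n then bb (n div 2) else 0)"
begin

lemma S0: "fps_nth (Sf bb) 0 = 1" by (simp add: Sf_def bb0)

lemma S_eq: "Sf bb * Sf bb + 2 * fps_X = Sf bb oo fps_X ^ 2"
proof -
  let ?T = "Abs_fps bb"
  have "?T * ?T + (?T oo fps_X ^ 2) = 2 * ?T - 2 * fps_X"
  proof (rule fps_ext)
    fix n
    have m: "fps_nth (?T * ?T + (?T oo fps_X ^ 2)) n = (\<Sum>k=0..n. bb k * bb (n-k)) + (if even n then bb (n div 2) else 0)"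
      by (simp add: fps_mult_nth compose_X2_nth)
    have r: "fps_nth (2 * ?T - 2 * fps_X) n = 2 * bb n - (if n = 1 then 2 else 0)"
      by (simp add: numeral_fps_const)
    have "(\<Sum>k=0..n. bb k * bb (n-k)) + (if even n then bb (n div 2) else 0) = 2 * bb n - (if n = 1 then 2 else 0)"
    proof (cases "n \<ge> 2")
      case True
      thus ?thesis using brec[OF True] by simp
    next
      case False
      hence "n = 0 \<or> n = 1" by auto
      thus ?thesis using bb0 bb1 by auto
    qed
    thus "fps_nth (?T * ?T + (?T oo fps_X ^ 2)) n = fps_nth (2 * ?T - 2 * fps_X) n"
      unfolding m r .
  qed
  thus ?thesis
    by (simp add: Sf_def fps_compose_sub_distrib algebra_simps)
qed

lemma W_X2: "Wf bb * Sf bb = Wf bb oo fps_X ^ 2"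
proof -
  let ?S = "Sf bb" and ?X2 = "fps_X ^ 2 :: real fps"
  have x0: "fps_nth ?X2 0 = 0" by simp
  have "fps_deriv (?S * ?S + 2 * fps_X) = fps_deriv (?S oo ?X2)" by (simp only: S_eq)
  hence d: "2 * ?S * fps_deriv ?S + 2 = (fps_deriv ?S oo ?X2) * (2 * fps_X)"
    by (simp add: fps_compose_deriv[OF x0] fps_deriv_power algebra_simps numeral_fps_const)
  have c: "Wf bb oo ?X2 = (?S oo ?X2) - 2 * ?X2 * (fps_deriv ?S oo ?X2)"
    unfolding Wf_def
    by (simp add: fps_compose_sub_distrib fps_compose_mult_distrib[OF x0] numeral_fps_const)
  have "Wf bb * ?S = ?S * ?S - fps_X * (2 * ?S * fps_deriv ?S + 2) + 2 * fps_X"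
    unfolding Wf_def by (simp add: algebra_simps)
  also have "\<dots> = (?S * ?S + 2 * fps_X) - 2 * ?X2 * (fps_deriv ?S oo ?X2)"
    unfolding d by (simp add: algebra_simps power2_eq_square)
  also have "\<dots> = Wf bb oo ?X2" unfolding c S_eq ..
  finally show ?thesis .
qed

lemma Wt_rec:
  "fps_nth (Wt bb t) n = (\<Sum>m=0..n. if even (n-m) then cf t m * fps_nth (Wt bb (t/2 + real m)) ((n-m) div 2) else 0)"
proof -
  define S where "S = Sf bb"
  define X2 where "X2 = (fps_X ^ 2 :: real fps)"
  define R where "R = S oo X2"
  define a where "a = -(t/2+1)"
  define D where "D = fps_const (-2) * fps_X * inverse R"
  define G where "G = (Wf bb oo X2) * pw a R"
  have S0': "fps_nth S 0 = 1" by (simp add: S_def S0)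
  have x0: "fps_nth X2 0 = 0" by (simp add: X2_def)
  have R0: "fps_nth R 0 = 1" by (simp add: R_def S0')
  have D0: "fps_nth D 0 = 0" by (simp add: D_def)
  have RinvR: "R * inverse R = 1" using R0 by (simp add: inverse_mult_eq_1')
  have SS0: "fps_nth (S * S) 0 = 1" using S0' by simp
  have 1: "Wt bb t = (Wf bb oo X2) * pw a (S * S)"
  proof -
    have "pw (-(t+1)) S = pw (-(t+1) - of_nat 1) S * S ^ 1" by (rule pw_minus_nat[OF S0'])
    moreover have "-(t+1) - of_nat 1 = a + a" by (simp add: a_def)
    ultimately have "pw (-(t+1)) S = pw a S * pw a S * S" using pw_add[OF S0', of a a] by simp
    moreover have "Wt bb t = Wf bb * pw (-(t+1)) S" by (simp add: Wt_def S_def)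
    ultimately have "Wt bb t = (Wf bb * S) * pw a (S * S)"
      by (simp add: pw_mult[OF S0' S0'] algebra_simps)
    thus ?thesis unfolding S_def X2_def W_X2 .
  qed
  have 2: "S * S = R * (1 + D)"
  proof -
    have "R * (1 + D) = R - 2 * fps_X * (R * inverse R)" by (simp add: D_def algebra_simps numeral_fps_const fps_const_neg[symmetric] del: fps_const_neg)
    also have "\<dots> = S * S" using RinvR S_eq[symmetric] by (simp add: R_def S_def X2_def)
    finally show ?thesis ..
  qed
  have 3: "Wt bb t = G * (fps_binomial a oo D)"
  proof -
    have "pw a (S * S) = pw a R * pw a (1 + D)" unfolding 2 by (rule pw_mult[OF R0]) (simp add: D0)
    moreover have "pw a (1 + D) = fps_binomial a oo D" by (simp add: pw_def)
    ultimately show ?thesis unfolding 1 G_def by (simp add: mult.assoc)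
  qed
  have 5: "G * D ^ i = fps_const ((-2) ^ i) * (fps_X ^ i * (Wt bb (t/2 + real i) oo X2))" for i
  proof -
    have Di: "D ^ i = fps_const ((-2) ^ i) * fps_X ^ i * inverse R ^ i"
      by (simp add: D_def power_mult_distrib fps_const_power)
    have "pw a R * inverse R ^ i = pw (a - of_nat i) R * (R * inverse R) ^ i"
      using pw_minus_nat[OF R0, of a i] by (simp add: power_mult_distrib algebra_simps)
    hence pr: "pw a R * inverse R ^ i = pw (a - of_nat i) R" by (simp add: RinvR)
    have "pw (a - of_nat i) R = pw (a - of_nat i) S oo X2"
      unfolding R_def by (rule pw_compose[OF x0 S0', symmetric])
    hence "G * inverse R ^ i = (Wf bb * pw (a - of_nat i) S) oo X2"
      by (simp add: G_def mult.assoc pr fps_compose_mult_distrib[OF x0])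
    moreover have "a - of_nat i = -((t/2 + real i) + 1)" by (simp add: a_def)
    ultimately have "G * inverse R ^ i = Wt bb (t/2 + real i) oo X2"
      by (simp add: Wt_def S_def)
    thus ?thesis unfolding Di by (simp add: algebra_simps)
  qed
  have "fps_nth (Wt bb t) n = (\<Sum>i = 0..n. fps_nth (fps_binomial a) i * fps_nth (G * D ^ i) n)"
    unfolding 3 by (rule compose_coeff_sum[OF D0])
  also have "\<dots> = (\<Sum>m=0..n. if even (n-m) then cf t m * fps_nth (Wt bb (t/2 + real m)) ((n-m) div 2) else 0)"
  proof (rule sum.cong[OF refl])
    fix m assume m: "m \<in> {0..n}"
    have g: "(a gchoose m) * (-2) ^ m = cf t m" unfolding a_def cf_def by (rule gchoose_cf)
    show "fps_nth (fps_binomial a) m * fps_nth (G * D ^ m) n = (if even (n-m) then cf t m * fps_nth (Wt bb (t/2 + real m)) ((n-m) div 2) else 0)"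
      using m unfolding 5 X2_def
      by (simp add: fps_X_power_mult_nth compose_X2_nth g[symmetric])
  qed
  finally show ?thesis .
qed

lemma Wt0: "fps_nth (Wt bb t) 0 = 1"
  by (simp add: Wt_def Wf_def S0)

lemma V_eq_Wt:
  assumes V0: "\<And>t. V t 0 = 1"
    and Vrec: "\<And>t n. n \<ge> 1 \<Longrightarrow> V t n = (\<Sum>m=0..n. if even (n-m) then cf t m * V (t/2 + real m) ((n-m) div 2) else 0)"
  shows "V t n = fps_nth (Wt bb t) n"
proof (induction n arbitrary: t rule: less_induct)
  case (less n)
  show ?case
  proof (cases "n = 0")
    case True thus ?thesis by (simp add: V0 Wt0)
  next
    case False
    hence "n \<ge> 1" by simp
    have "V t n = (\<Sum>m=0..n. if even (n-m) then cf t m * V (t/2 + real m) ((n-m) div 2) else 0)"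
      by (rule Vrec[OF \<open>n \<ge> 1\<close>])
    also have "\<dots> = (\<Sum>m=0..n. if even (n-m) then cf t m * fps_nth (Wt bb (t/2 + real m)) ((n-m) div 2) else 0)"
    proof (rule sum.cong[OF refl])
      fix m assume "m \<in> {0..n}"
      have "(n - m) div 2 < n" using \<open>n \<ge> 1\<close> by simp
      thus "(if even (n-m) then cf t m * V (t/2 + real m) ((n-m) div 2) else 0) = (if even (n-m) then cf t m * fps_nth (Wt bb (t/2 + real m)) ((n-m) div 2) else 0)"
        using less.IH by simp
    qed
    also have "\<dots> = fps_nth (Wt bb t) n" by (rule Wt_rec[symmetric])
    finally show ?thesis .
  qed
qed

lemma Wt_minus1: "n \<ge> 1 \<Longrightarrow> fps_nth (Wt bb (-1)) n = (2 * real n - 1) * bb n"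
  by (simp add: Wt_def Wf_def Sf_def fps_deriv_def algebra_simps numeral_fps_const)

end

fun P :: "real \<Rightarrow> nat list \<Rightarrow> real" where
  "P t [] = 1"
| "P t (x # xs) = (2 * real (x + sum_list xs) + t) * P t xs"

lemma P_append: "P t (xs @ ys) = P (t + 2 * real (sum_list ys)) xs * P t ys"
  by (induction xs) (simp_all add: algebra_simps)

lemma sum_map2: "sum_list (map ((*) (2::nat)) xs) = 2 * sum_list xs"
  by (induction xs) auto

lemma P_double: "P t (map ((*) 2) mu) = 2 ^ length mu * P (t/2) mu"
proof (induction mu)
  case (Cons x mu)
  have "P t (map ((*) 2) (x # mu)) = (2 * real (2 * x + 2 * sum_list mu) + t) * P t (map ((*) 2) mu)"
    by (simp add: sum_map2)
  also have "\<dots> = 2 ^ length (x # mu) * P (t/2) (x # mu)"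
    unfolding Cons by (simp add: field_simps)
  finally show ?case .
qed simp

lemma P_rep: "P t (replicate m 1) = (\<Prod>j\<in>{1..m}. 2 * real j + t)"
  by (induction m) (simp_all add: prod.cl_ivl_Suc sum_list_replicate algebra_simps)

lemma count_map2: "count_list (map ((*) (2::nat)) xs) (2 * y) = count_list xs y"
  by (induction xs) auto

lemma count_map2_1: "count_list (map ((*) (2::nat)) xs) 1 = 0"
  by (induction xs) auto

lemma count_map2_1': "count_list (map ((*) (2::nat)) xs) (Suc 0) = 0"
  by (induction xs) auto

lemma count_rep: "count_list (replicate m x) y = (if x = y then m else 0)"
  by (induction m) auto

lemma z_alt: assumes "N \<ge> sum_list lam"
  shows "z lam = (\<Prod>i\<in>{0..N}. (2 ^ i) ^ Defs.mult lam i * fact (Defs.mult lam i))"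
  unfolding z_def
proof (rule prod.mono_neutral_left)
  show "\<forall>i\<in>{0..N} - {0..sum_list lam}. (2 ^ i) ^ Defs.mult lam i * fact (Defs.mult lam i) = (1::nat)"
  proof
    fix i assume i: "i \<in> {0..N} - {0..sum_list lam}"
    have "2 ^ i \<notin> set lam"
    proof
      assume "2 ^ i \<in> set lam"
      hence "2 ^ i \<le> sum_list lam" by (simp add: member_le_sum_list)
      moreover have "i < 2 ^ i" by (rule less_exp)
      ultimately have "i < sum_list lam" by linarith
      thus False using i by auto
    qed
    hence "Defs.mult lam i = 0" by (simp add: Defs.mult_def count_list_0_iff)
    thus "(2 ^ i) ^ Defs.mult lam i * fact (Defs.mult lam i) = (1::nat)" by simp
  qed
qed (use assms in auto)

lemma sum_count_pow: fixes xs :: "nat list" assumes "finite A" "\<forall>x\<in>set xs. \<exists>k\<in>A. x = 2 ^ k"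
  shows "(\<Sum>i\<in>A. count_list xs (2 ^ i)) = length xs"
  using assms(2)
proof (induction xs)
  case Nil thus ?case by simp
next
  case (Cons x xs)
  then obtain k where k: "k \<in> A" "x = 2 ^ k" by auto
  have "(\<Sum>i\<in>A. count_list (x # xs) (2 ^ i)) = (\<Sum>i\<in>A. (if i = k then 1 else 0) + count_list xs (2 ^ i))"
    by (intro sum.cong refl) (auto simp: k)
  also have "\<dots> = 1 + length xs" using Cons k assms(1) by (simp add: sum.distrib)
  finally show ?case by simp
qed

lemma z_pos: "z lam > 0" by (simp add: z_def)

lemma z_g: assumes pw2: "\<forall>x\<in>set mu. \<exists>k. x = 2 ^ k"
  shows "z (map ((*) 2) mu @ replicate m 1) = fact m * 2 ^ length mu * z mu"
proof -
  let ?g = "map ((*) 2) mu @ replicate m 1"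
  define M where "M = sum_list ?g"
  have Mmu: "sum_list mu \<le> M" by (simp add: M_def sum_map2)
  have "z ?g = (\<Prod>i\<in>{0..Suc M}. (2 ^ i) ^ Defs.mult ?g i * fact (Defs.mult ?g i))"
    by (rule z_alt) (simp add: M_def)
  also have "\<dots> = (2 ^ 0) ^ Defs.mult ?g 0 * fact (Defs.mult ?g 0) * (\<Prod>i\<in>{0..M}. (2 ^ Suc i) ^ Defs.mult ?g (Suc i) * fact (Defs.mult ?g (Suc i)))"
    by (subst prod.atLeast0_atMost_Suc_shift) (simp add: comp_def)
  also have "Defs.mult ?g 0 = m" by (simp add: Defs.mult_def count_map2_1 count_map2_1' count_rep)
  also have "(\<Prod>i\<in>{0..M}. ((2::nat) ^ Suc i) ^ Defs.mult ?g (Suc i) * fact (Defs.mult ?g (Suc i)))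
      = (\<Prod>i\<in>{0..M}. (2::nat) ^ count_list mu (2^i) * ((2 ^ i) ^ Defs.mult mu i * fact (Defs.mult mu i)))"
  proof (intro prod.cong refl)
    fix i
    have "Defs.mult ?g (Suc i) = count_list mu (2^i)"
      using count_map2[of mu "2^i"] by (simp add: Defs.mult_def count_rep)
    thus "(2 ^ Suc i) ^ Defs.mult ?g (Suc i) * fact (Defs.mult ?g (Suc i)) = (2::nat) ^ count_list mu (2^i) * ((2 ^ i) ^ Defs.mult mu i * fact (Defs.mult mu i))"
      by (simp add: Defs.mult_def power_mult_distrib)
  qed
  also have "\<dots> = (2::nat) ^ (\<Sum>i\<in>{0..M}. count_list mu (2^i)) * z mu"
    by (simp add: prod.distrib power_sum z_alt[OF Mmu])
  also have "(\<Sum>i\<in>{0..M}. count_list mu (2^i)) = length mu"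
  proof (rule sum_count_pow)
    show "\<forall>x\<in>set mu. \<exists>k\<in>{0..M}. x = 2 ^ k"
    proof
      fix x assume x: "x \<in> set mu"
      then obtain k where k: "x = 2 ^ k" using pw2 by auto
      have "k < 2 ^ k" by (rule less_exp)
      moreover have "x \<le> sum_list mu" using x by (simp add: member_le_sum_list)
      ultimately have "k \<le> M" using k Mmu by linarith
      thus "\<exists>k\<in>{0..M}. x = 2 ^ k" using k by auto
    qed
  qed simp
  finally show ?thesis by simp
qed

abbreviation BP where "BP \<equiv> binary_partitions"

lemma length_le_sum: "\<forall>x\<in>set xs. x \<ge> (1::nat) \<Longrightarrow> length xs \<le> sum_list xs"
  by (induction xs) auto

lemma pow2_ge1: "\<exists>k. x = (2::nat) ^ k \<Longrightarrow> x \<ge> 1"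
  by auto

lemma bp_finite: "finite (BP n)"
proof (rule finite_subset)
  show "BP n \<subseteq> {xs. set xs \<subseteq> {0..n} \<and> length xs \<le> n}"
  proof
    fix xs assume "xs \<in> BP n"
    hence h: "\<forall>p\<in>set xs. \<exists>k. p = 2 ^ k" "sum_list xs = n" by (auto simp: binary_partitions_def)
    hence "\<forall>x\<in>set xs. x \<ge> 1" using pow2_ge1 by blast
    hence "length xs \<le> n" using length_le_sum h(2) by metis
    moreover have "set xs \<subseteq> {0..n}" using h(2) by (auto simp: member_le_sum_list)
    ultimately show "xs \<in> {xs. set xs \<subseteq> {0..n} \<and> length xs \<le> n}" by simp
  qed
qed (rule finite_lists_length_le, simp)

definition gl :: "nat \<Rightarrow> nat list \<Rightarrow> nat list" where
  "gl m mu = map ((*) 2) mu @ replicate m 1"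

lemma gl_in: assumes "m \<le> n" "even (n - m)" "mu \<in> BP ((n - m) div 2)"
  shows "gl m mu \<in> BP n"
proof -
  have mu: "sorted_wrt (\<ge>) mu" "\<forall>p\<in>set mu. \<exists>k. p = 2 ^ k" "sum_list mu = (n - m) div 2"
    using assms(3) by (auto simp: binary_partitions_def)
  have s1: "sorted_wrt (\<ge>) (map ((*) (2::nat)) mu)"
    using mu(1) by (auto simp: sorted_wrt_map elim: sorted_wrt_mono_rel[rotated])
  have s2: "sorted_wrt (\<ge>) (replicate m (1::nat))" by (simp add: sorted_wrt_iff_nth_less)
  have s3: "\<forall>x\<in>set (map ((*) 2) mu). \<forall>y\<in>set (replicate m (1::nat)). x \<ge> y"
    using mu(2) pow2_ge1 by fastforce
  have "sorted_wrt (\<ge>) (gl m mu)" unfolding gl_def sorted_wrt_append using s1 s2 s3 by blast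
  moreover have "\<forall>p\<in>set (gl m mu). \<exists>k. p = 2 ^ k"
  proof
    fix p assume "p \<in> set (gl m mu)"
    hence "p = 1 \<or> (\<exists>x\<in>set mu. p = 2 * x)" by (auto simp: gl_def split: if_splits)
    thus "\<exists>k. p = 2 ^ k"
    proof
      assume "\<exists>x\<in>set mu. p = 2 * x"
      then obtain x k where "p = 2 * x" "x = 2 ^ k" using mu(2) by blast
      hence "p = 2 ^ Suc k" by simp
      thus ?thesis ..
    qed (rule exI[of _ 0], simp)
  qed
  moreover have "sum_list (gl m mu) = n"
    using assms(1,2) mu(3) by (simp add: gl_def sum_map2 sum_list_replicate)
  ultimately show ?thesis by (simp add: binary_partitions_def)
qed

lemma gl_count1: "count_list (gl m mu) 1 = m"
  by (simp add: gl_def count_map2_1 count_map2_1' count_rep)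

lemma gl_inj: "gl m mu = gl m' mu' \<Longrightarrow> m = m' \<and> mu = mu'"
proof -
  assume e: "gl m mu = gl m' mu'"
  hence mm: "m = m'" using gl_count1 by metis
  hence "map ((*) (2::nat)) mu = map ((*) 2) mu'" using e by (simp add: gl_def)
  moreover have "inj ((*) (2::nat))" by (auto simp: inj_def)
  ultimately have "mu = mu'" by (simp add: inj_map_eq_map)
  thus ?thesis using mm by simp
qed

lemma gl_surj: assumes lam: "lam \<in> BP n"
  shows "\<exists>m mu. m \<le> n \<and> even (n - m) \<and> mu \<in> BP ((n - m) div 2) \<and> lam = gl m mu"
proof -
  have h: "sorted_wrt (\<ge>) lam" "\<forall>p\<in>set lam. \<exists>k. p = 2 ^ k" "sum_list lam = n"
    using lam by (auto simp: binary_partitions_def)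
  define A where "A = takeWhile (\<lambda>x. x \<noteq> 1) lam"
  define B where "B = dropWhile (\<lambda>x. x \<noteq> 1) lam"
  have AB: "lam = A @ B" by (simp add: A_def B_def)
  have "sorted_wrt (\<ge>) (A @ B)" using h(1) by (simp add: A_def B_def)
  hence sA: "sorted_wrt (\<ge>) A" and sB: "sorted_wrt (\<ge>) B" unfolding sorted_wrt_append by auto
  have B1: "\<forall>x\<in>set B. x = 1"
  proof (cases B)
    case Nil thus ?thesis by simp
  next
    case (Cons y ys)
    have y: "y = 1" using Cons unfolding B_def dropWhile_eq_Cons_conv by simp
    have "\<forall>x\<in>set ys. x \<le> 1" using sB Cons y by simp
    moreover have "\<forall>x\<in>set ys. x \<ge> 1" using h(2) AB Cons pow2_ge1 by auto
    ultimately show ?thesis using Cons y by fastforce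
  qed
  define m where "m = length B"
  have Brep: "B = replicate m 1" unfolding m_def using B1 by (simp add: replicate_length_same)
  have Aev: "\<forall>x\<in>set A. \<exists>k. x = 2 ^ Suc k"
  proof
    fix x assume x: "x \<in> set A"
    have "x \<in> set lam \<and> x \<noteq> 1" using x unfolding A_def by (rule set_takeWhileD)
    hence "x \<noteq> 1" by simp
    moreover obtain k where "x = 2 ^ k" using h(2) AB x by auto
    ultimately have "x = 2 ^ Suc (k - 1)" by (cases k) auto
    thus "\<exists>k. x = 2 ^ Suc k" ..
  qed
  define mu where "mu = map (\<lambda>x. x div 2) A"
  have Amu: "A = map ((*) 2) mu"
    unfolding mu_def map_map using Aev by (induction A) auto
  have lg: "lam = gl m mu" unfolding gl_def using AB Brep Amu by simp
  have sum: "2 * sum_list mu + m = n" using h(3) lg by (simp add: gl_def sum_map2 sum_list_replicate)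
  have "mu \<in> BP ((n - m) div 2)"
  proof -
    have "sorted_wrt (\<ge>) mu" unfolding mu_def sorted_wrt_map
      by (rule sorted_wrt_mono_rel[OF _ sA]) (simp add: div_le_mono)
    moreover have "\<forall>p\<in>set mu. \<exists>k. p = 2 ^ k"
      unfolding mu_def using Aev by auto
    moreover have "sum_list mu = (n - m) div 2" using sum by simp
    ultimately show ?thesis by (simp add: binary_partitions_def)
  qed
  moreover have "m \<le> n" "even (n - m)" using sum by auto
  ultimately show ?thesis using lg by blast
qed

lemma bp_bij: "bij_betw (\<lambda>(m, mu). gl m mu) (SIGMA m:{m\<in>{0..n}. even (n - m)}. BP ((n - m) div 2)) (BP n)"
  unfolding bij_betw_def
proof
  show "inj_on (\<lambda>(m, mu). gl m mu) (SIGMA m:{m\<in>{0..n}. even (n - m)}. BP ((n - m) div 2))"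
    by (auto simp: inj_on_def dest: gl_inj)
  show "(\<lambda>(m, mu). gl m mu) ` (SIGMA m:{m\<in>{0..n}. even (n - m)}. BP ((n - m) div 2)) = BP n"
  proof
    show "(\<lambda>(m, mu). gl m mu) ` (SIGMA m:{m\<in>{0..n}. even (n - m)}. BP ((n - m) div 2)) \<subseteq> BP n"
      using gl_in by auto
    show "BP n \<subseteq> (\<lambda>(m, mu). gl m mu) ` (SIGMA m:{m\<in>{0..n}. even (n - m)}. BP ((n - m) div 2))"
    proof
      fix lam assume "lam \<in> BP n"
      then obtain m mu where "m \<le> n" "even (n - m)" "mu \<in> BP ((n - m) div 2)" "lam = gl m mu"
        using gl_surj by blast
      thus "lam \<in> (\<lambda>(m, mu). gl m mu) ` (SIGMA m:{m\<in>{0..n}. even (n - m)}. BP ((n - m) div 2))"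
        by force
    qed
  qed
qed

definition Vp :: "real \<Rightarrow> nat \<Rightarrow> real" where
  "Vp t n = (\<Sum>lam\<in>BP n. P t lam / real (z lam))"

lemma BP0: "BP 0 = {[]}"
proof -
  have "xs \<in> BP 0 \<Longrightarrow> xs = []" for xs
    by (cases xs) (auto simp: binary_partitions_def)
  moreover have "[] \<in> BP 0" by (simp add: binary_partitions_def)
  ultimately show ?thesis by blast
qed

lemma Vp0: "Vp t 0 = 1"
  by (simp add: Vp_def BP0 z_def Defs.mult_def)

lemma term_gl: assumes "mu \<in> BP k"
  shows "P t (gl m mu) / real (z (gl m mu)) = cf t m * (P (t/2 + real m) mu / real (z mu))"
proof -
  have pw2: "\<forall>x\<in>set mu. \<exists>k. x = 2 ^ k" using assms by (simp add: binary_partitions_def)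
  have "P t (gl m mu) = 2 ^ length mu * P ((t + 2 * real m)/2) mu * (\<Prod>j\<in>{1..m}. 2 * real j + t)"
    by (simp add: gl_def P_append P_double P_rep[simplified] sum_list_replicate)
  also have "(t + 2 * real m)/2 = t/2 + real m" by simp
  finally have p: "P t (gl m mu) = 2 ^ length mu * P (t/2 + real m) mu * (\<Prod>j\<in>{1..m}. 2 * real j + t)" .
  have zz: "real (z (gl m mu)) = fact m * 2 ^ length mu * real (z mu)"
    unfolding gl_def z_g[OF pw2] by simp
  have "z mu > 0" by (rule z_pos)
  thus ?thesis unfolding p zz cf_def by (simp add: field_simps)
qed

lemma Vp_rec: "Vp t n = (\<Sum>m=0..n. if even (n-m) then cf t m * Vp (t/2 + real m) ((n-m) div 2) else 0)"
proof -
  let ?Sig = "SIGMA m:{m\<in>{0..n}. even (n - m)}. BP ((n - m) div 2)"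
  have "Vp t n = (\<Sum>x\<in>?Sig. P t ((\<lambda>(m, mu). gl m mu) x) / real (z ((\<lambda>(m, mu). gl m mu) x)))"
    unfolding Vp_def by (rule sum.reindex_bij_betw[OF bp_bij, symmetric])
  also have "\<dots> = (\<Sum>m\<in>{m\<in>{0..n}. even (n - m)}. \<Sum>mu\<in>BP ((n - m) div 2). P t (gl m mu) / real (z (gl m mu)))"
    by (subst sum.Sigma) (auto simp: bp_finite split_def)
  also have "\<dots> = (\<Sum>m\<in>{m\<in>{0..n}. even (n - m)}. cf t m * Vp (t/2 + real m) ((n-m) div 2))"
    by (intro sum.cong refl) (simp add: Vp_def sum_distrib_left term_gl)
  also have "\<dots> = (\<Sum>m=0..n. if even (n-m) then cf t m * Vp (t/2 + real m) ((n-m) div 2) else 0)"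
    by (rule sum.inter_filter) simp
  finally show ?thesis .
qed

definition fs :: "nat list \<Rightarrow> nat \<Rightarrow> nat" where
  "fs lam i = (\<Sum>j\<in>{i..length lam}. lam ! (j - 1))"

lemma fs_Cons_Suc: "i \<ge> 1 \<Longrightarrow> fs (x # xs) (Suc i) = fs xs i"
proof -
  assume i: "i \<ge> 1"
  have "fs (x # xs) (Suc i) = (\<Sum>j\<in>{Suc i..Suc (length xs)}. (x # xs) ! (j - 1))"
    by (simp add: fs_def)
  also have "\<dots> = (\<Sum>j\<in>{i..length xs}. (x # xs) ! (Suc j - 1))"
    by (rule sum.shift_bounds_cl_Suc_ivl)
  also have "\<dots> = (\<Sum>j\<in>{i..length xs}. xs ! (j - 1))"
  proof (rule sum.cong[OF refl])
    fix j assume "j \<in> {i..length xs}"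
    hence "j \<ge> 1" using i by simp
    thus "(x # xs) ! (Suc j - 1) = xs ! (j - 1)" by (cases j) auto
  qed
  finally show ?thesis by (simp add: fs_def)
qed

lemma fs_Cons_1: "fs (x # xs) 1 = x + fs xs 1"
proof -
  have "fs (x # xs) 1 = (\<Sum>j\<in>{1..Suc (length xs)}. (x # xs) ! (j - 1))" by (simp add: fs_def)
  also have "\<dots> = (x # xs) ! (1 - 1) + (\<Sum>j\<in>{Suc 1..Suc (length xs)}. (x # xs) ! (j - 1))"
    by (rule sum.atLeast_Suc_atMost) simp
  also have "(\<Sum>j\<in>{Suc 1..Suc (length xs)}. (x # xs) ! (j - 1)) = fs (x # xs) (Suc 1)"
    by (simp add: fs_def)
  also have "\<dots> = fs xs 1" by (rule fs_Cons_Suc) simp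
  finally show ?thesis by simp
qed

lemma fs_1: "fs xs 1 = sum_list xs"
proof (induction xs)
  case Nil thus ?case by (simp add: fs_def)
next
  case (Cons x xs)
  have "fs (x # xs) 1 = x + fs xs 1" by (rule fs_Cons_1)
  thus ?case using Cons by simp
qed

lemmas fs_1' = fs_1[simplified]
lemmas fs_Cons_1' = fs_Cons_1[simplified]

lemma P_target: "P t lam = (\<Prod>i\<in>{1..length lam}. 2 * real (fs lam i) + t)"
proof (induction lam)
  case Nil thus ?case by simp
next
  case (Cons x xs)
  have "(\<Prod>i\<in>{1..length (x#xs)}. 2 * real (fs (x#xs) i) + t)
      = (2 * real (fs (x#xs) 1) + t) * (\<Prod>i\<in>{Suc 1..length (x#xs)}. 2 * real (fs (x#xs) i) + t)"
    by (rule prod.atLeast_Suc_atMost) simp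
  also have "length (x#xs) = Suc (length xs)" by simp
  also have "(\<Prod>i\<in>{Suc 1..Suc (length xs)}. 2 * real (fs (x#xs) i) + t)
      = (\<Prod>i\<in>{1..length xs}. 2 * real (fs (x#xs) (Suc i)) + t)"
    by (rule prod.shift_bounds_cl_Suc_ivl)
  also have "\<dots> = (\<Prod>i\<in>{1..length xs}. 2 * real (fs xs i) + t)"
    by (intro prod.cong refl) (simp add: fs_Cons_Suc)
  finally show ?case using Cons by (simp add: fs_Cons_1 fs_1 fs_Cons_1' fs_1')
qed

lemma target_eq: assumes "n \<ge> 1" "lam \<in> BP n"
  shows "(\<Prod>i\<in>{2..length lam}. 2 * real (\<Sum>j\<in>{i..length lam}. lam ! (j - 1)) - 1) = P (-1) lam / (2 * real n - 1)"
proof -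
  obtain x xs where lam: "lam = x # xs" using assms by (cases lam) (auto simp: binary_partitions_def)
  have sn: "sum_list lam = n" using assms by (simp add: binary_partitions_def)
  have "P (-1) lam = (\<Prod>i\<in>{1..length lam}. 2 * real (fs lam i) + (-1))"
    by (rule P_target)
  also have "\<dots> = (2 * real (fs lam 1) + (-1)) * (\<Prod>i\<in>{Suc 1..length lam}. 2 * real (fs lam i) + (-1))"
    by (rule prod.atLeast_Suc_atMost) (simp add: lam)
  also have "fs lam 1 = n" using sn by (simp add: fs_1 fs_1')
  finally have "P (-1) lam = (2 * real n - 1) * (\<Prod>i\<in>{2..length lam}. 2 * real (fs lam i) - 1)"
    by (simp add: numeral_2_eq_2)
  moreover have "2 * real n - 1 \<noteq> 0" using assms(1) by simp
  ultimately show ?thesis by (simp add: fs_def)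
qed


theorem theorem1p2:
  fixes n :: nat
  assumes "n \<ge> 1"
  shows "real (b n) =
    (\<Sum>lam\<in>binary_partitions n.
       (\<Prod>i\<in>{2..length lam}. 2 * real (\<Sum>j\<in>{i..length lam}. lam ! (j - 1)) - 1)
       / real (z lam))"
proof -
  define bb where "bb = (\<lambda>k. real (b k))"
  have bb0: "bb 0 = 0" by (simp add: bb_def b0)
  have bb1: "bb 1 = 1" using b1 by (simp add: bb_def)
  have brec: "2 * bb k = (\<Sum>j=0..k. bb j * bb (k-j)) + (if even k then bb (k div 2) else 0)" if "k \<ge> 2" for k
  proof -
    have "real (2 * b k) = real ((\<Sum>j=0..k. b j * b (k - j)) + (if even k then b (k div 2) else 0))"
      using b_rec_nat[OF that] by simp
    thus ?thesis by (simp add: bb_def)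
  qed
  have V: "Vp t m = fps_nth (Wt bb t) m" for t m
    apply (rule V_eq_Wt[OF bb0 bb1])
      apply (rule brec, assumption)
     apply (rule Vp0)
    apply (rule Vp_rec)
    done
  have W1: "fps_nth (Wt bb (-1)) n = (2 * real n - 1) * bb n"
    by (rule Wt_minus1[OF bb0 bb1 _ assms]) (rule brec)
  have "Vp (-1) n = (2 * real n - 1) * bb n"
    using V W1 by simp
  moreover have "2 * real n - 1 \<noteq> 0" using assms by simp
  ultimately have "real (b n) = Vp (-1) n / (2 * real n - 1)" by (simp add: bb_def)
  also have "\<dots> = (\<Sum>lam\<in>binary_partitions n. P (-1) lam / (2 * real n - 1) / real (z lam))"
    by (simp add: Vp_def sum_divide_distrib mult.commute)
  also have "\<dots> = (\<Sum>lam\<in>binary_partitions n.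
       (\<Prod>i\<in>{2..length lam}. 2 * real (\<Sum>j\<in>{i..length lam}. lam ! (j - 1)) - 1) / real (z lam))"
  proof (rule sum.cong[OF refl])
    fix lam assume lam: "lam \<in> binary_partitions n"
    show "P (-1) lam / (2 * real n - 1) / real (z lam) = (\<Prod>i\<in>{2..length lam}. 2 * real (\<Sum>j\<in>{i..length lam}. lam ! (j - 1)) - 1) / real (z lam)"
      unfolding target_eq[OF assms lam] ..
  qed
  finally show ?thesis .
qed

end
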